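(* Let $\mathsf V$ be a quantale, $X=(X,a)$ a $\mathsf V$-category, $s=(x_n)_{n\in\mathbb N}$ a sequence in $X$ and $x\in X$. Then $$\bigvee_{N\in\mathbb N}\bigwedge_{n\ge N}a(x_n,x)\ \ge\ \mathrm{Cauchy}(s)\otimes\bigwedge_{N\in\mathbb N}\bigvee_{n\ge N}a(x_n,x).$$
   Context: A quantale $(\mathsf V,\otimes,k)$ is a complete anti-symmetric lattice with an associative, commutative operation $\otimes$ with neutral element $k$ distributing over arbitrary suprema. A $\mathsf V$-category $(X,a)$ is a set with $a:X\times X\to\mathsf V$ such that $k\le a(x,x)$ and $a(x,y)\otimes a(y,z)\le a(x,z)$. For a sequence $s=(x_n)$, $\mathrm{Cauchy}(s)=\bigvee_{N}\bigwedge_{n,m\ge N}a(x_n,x_m)$. *)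

theory Defs
  imports Main
begin

definition quantale :: "('v::complete_lattice \<Rightarrow> 'v \<Rightarrow> 'v) \<Rightarrow> 'v \<Rightarrow> bool" where
  "quantale tensor k \<longleftrightarrow>
     (\<forall>u v w. tensor (tensor u v) w = tensor u (tensor v w)) \<and>
     (\<forall>u v. tensor u v = tensor v u) \<and>
     (\<forall>u. tensor k u = u) \<and>
     (\<forall>u S. tensor u (Sup S) = (SUP v\<in>S. tensor u v))"

definition V_category :: "('v::complete_lattice \<Rightarrow> 'v \<Rightarrow> 'v) \<Rightarrow> 'v \<Rightarrow> ('x \<Rightarrow> 'x \<Rightarrow> 'v) \<Rightarrow> bool" where
  "V_category tensor k a \<longleftrightarrow>
     (\<forall>x. k \<le> a x x) \<and> (\<forall>x y z. tensor (a x y) (a y z) \<le> a x z)"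

definition Cauchy :: "('x \<Rightarrow> 'x \<Rightarrow> 'v::complete_lattice) \<Rightarrow> (nat \<Rightarrow> 'x) \<Rightarrow> 'v" where
  "Cauchy a s = (SUP N. INF p\<in>{(n,m). n \<ge> N \<and> m \<ge> N}. a (s (fst p)) (s (snd p)))"

end

theory Submission
  imports Defs
begin

lemma q_sup: assumes "quantale tensor k" shows "tensor u (Sup S) = (SUP v\<in>S. tensor u v)"
  using assms unfolding quantale_def by blast

lemma q_comm: assumes "quantale tensor k" shows "tensor u v = tensor v u"
  using assms unfolding quantale_def by blast

lemma q_mono: assumes "quantale tensor k" "v \<le> w" shows "tensor u v \<le> tensor u w"
proof -
  have "w = Sup {v, w}" using assms(2) by (simp add: sup_absorb2)
  then have "tensor u w = (SUP y\<in>{v,w}. tensor u y)" using q_sup[OF assms(1)] by metis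
  then have "tensor u w = sup (tensor u v) (tensor u w)" by simp
  then show ?thesis by (metis sup.cobounded1)
qed

lemma q_mono2: assumes "quantale tensor k" "v \<le> w" shows "tensor v u \<le> tensor w u"
proof -
  have "tensor u v \<le> tensor u w" by (rule q_mono[OF assms])
  moreover have "tensor v u = tensor u v" "tensor w u = tensor u w" by (rule q_comm[OF assms(1)])+
  ultimately show ?thesis by simp
qed

theorem lemma3p11:
  fixes tensor :: "'v::complete_lattice \<Rightarrow> 'v \<Rightarrow> 'v" and k :: 'v
    and a :: "'x \<Rightarrow> 'x \<Rightarrow> 'v" and s :: "nat \<Rightarrow> 'x" and x :: 'x
  assumes "quantale tensor k"
    and "V_category tensor k a"
  shows "tensor (Cauchy a s) (INF N. SUP n\<in>{N..}. a (s n) x)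
           \<le> (SUP N. INF n\<in>{N..}. a (s n) x)"
proof -
  define L where "L = (INF N. SUP n\<in>{N..}. a (s n) x)"
  define C where "C N = (INF p\<in>{(n,m). n \<ge> N \<and> m \<ge> N}. a (s (fst p)) (s (snd p)))" for N
  have tri: "tensor (a u v) (a v w) \<le> a u w" for u v w
    using assms(2) unfolding V_category_def by blast
  have main: "tensor (C N) L \<le> a (s m) x" if "m \<ge> N" for N m
  proof -
    have "L \<le> (SUP n\<in>{N..}. a (s n) x)" unfolding L_def by (rule INF_lower) simp
    then have "tensor (C N) L \<le> tensor (C N) (SUP n\<in>{N..}. a (s n) x)"
      by (rule q_mono[OF assms(1)])
    also have "\<dots> = (SUP n\<in>{N..}. tensor (C N) (a (s n) x))"
      using q_sup[OF assms(1)] by (simp add: image_image)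
    also have "\<dots> \<le> a (s m) x"
    proof (rule SUP_least)
      fix n assume n: "n \<in> {N..}"
      have "C N \<le> a (s m) (s n)" unfolding C_def
        by (rule INF_lower2[of "(m,n)"]) (use n that in auto)
      then have "tensor (C N) (a (s n) x) \<le> tensor (a (s m) (s n)) (a (s n) x)"
        by (rule q_mono2[OF assms(1)])
      also have "\<dots> \<le> a (s m) x" by (rule tri)
      finally show "tensor (C N) (a (s n) x) \<le> a (s m) x" .
    qed
    finally show ?thesis .
  qed
  have "tensor (Cauchy a s) L = tensor L (Cauchy a s)" by (rule q_comm[OF assms(1)])
  also have "\<dots> = (SUP N. tensor L (C N))"
    unfolding Cauchy_def C_def using q_sup[OF assms(1)] by (simp add: image_image)
  also have "\<dots> \<le> (SUP N. INF n\<in>{N..}. a (s n) x)"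
  proof (rule SUP_mono)
    fix N
    have "tensor L (C N) = tensor (C N) L" by (rule q_comm[OF assms(1)])
    also have "\<dots> \<le> (INF n\<in>{N..}. a (s n) x)"
      by (rule INF_greatest) (use main in auto)
    finally show "\<exists>M\<in>UNIV. tensor L (C N) \<le> (INF n\<in>{M..}. a (s n) x)" by blast
  qed
  finally show ?thesis unfolding L_def .
qed

end
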